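(* Let $X$ be a subset of $[0,1]$ with finitely many isolated points. Then $\overline{\dim}_{GB}(X)=\overline{\dim}_B(X)+1$.
   Context: For $\delta>0$ and $F\subset\mathbb{R}^d$, $N_\delta(F)$ is the number of cubes of the standard $\delta$-grid in $\mathbb{R}^d$ that intersect $F$, and $\overline{\dim}_B(F)=\limsup_{\delta\to0}\frac{\log N_\delta(F)}{-\log\delta}$ is the upper box dimension. $C_u(X)$ is the set of uniformly continuous real functions on $X$, $\mathrm{graph}(f)=\{(x,f(x)):x\in X\}$, and the upper graph box dimension is $\overline{\dim}_{GB}(X)=\sup_{f\in C_u(X)}\overline{\dim}_B(\mathrm{graph}(f))$. *)

theory Defs
  imports "HOL-Analysis.Analysis"
begin

text \<open>A grid cube is indexed by an integer vector k (on the coordinate basis) and equals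
  the product over basis vectors b of [k b * delta, (k b + 1) * delta].\<close>
definition grid_count :: "real \<Rightarrow> 'a::euclidean_space set \<Rightarrow> nat" where
  "grid_count \<delta> F = card {k \<in> Basis \<rightarrow>\<^sub>E (UNIV :: int set).
      \<exists>x\<in>F. \<forall>b\<in>Basis. of_int (k b) * \<delta> \<le> x \<bullet> b \<and> x \<bullet> b \<le> (of_int (k b) + 1) * \<delta>}"

definition upper_box_dim :: "'a::euclidean_space set \<Rightarrow> ereal" where
  "upper_box_dim F = Limsup (at_right 0) (\<lambda>\<delta>. ereal (ln (real (grid_count \<delta> F)) / - ln \<delta>))"

definition upper_graph_box_dim :: "real set \<Rightarrow> ereal" where
  "upper_graph_box_dim X =
     (SUP f \<in> {f :: real \<Rightarrow> real. uniformly_continuous_on X f}.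
        upper_box_dim ((\<lambda>x. (x, f x)) ` X))"

end

theory Submission
  imports Defs
begin


lemma grid_count_real:
  "grid_count d (F::real set) = card {i::int. \<exists>x\<in>F. of_int i * d \<le> x \<and> x \<le> (of_int i + 1) * d}"
proof -
  let ?S = "{k \<in> Basis \<rightarrow>\<^sub>E (UNIV :: int set).
      \<exists>x\<in>F. \<forall>b\<in>Basis. of_int (k b) * d \<le> x \<bullet> b \<and> x \<bullet> b \<le> (of_int (k b) + 1) * d}"
  have inj: "inj_on (\<lambda>k. k 1) ?S"
    by (auto simp: inj_on_def PiE_iff extensional_def Basis_real_def intro!: ext) (metis)
  have img: "(\<lambda>k. k 1) ` ?S = {i::int. \<exists>x\<in>F. of_int i * d \<le> x \<and> x \<le> (of_int i + 1) * d}"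
  proof safe
    fix i x assume "x \<in> F" "of_int i * d \<le> x" "x \<le> (of_int i + 1) * d"
    then show "i \<in> (\<lambda>k. k 1) ` ?S"
      by (intro image_eqI[where x="\<lambda>b. if b = 1 then i else undefined"])
         (auto simp: Basis_real_def PiE_iff extensional_def)
  qed (auto simp: Basis_real_def)
  show ?thesis unfolding grid_count_def using card_image[OF inj] img by simp
qed

lemma grid_count_prod:
  "grid_count d (F::(real\<times>real) set) = card {k::int\<times>int. \<exists>p\<in>F.
     of_int (fst k) * d \<le> fst p \<and> fst p \<le> (of_int (fst k) + 1) * d \<and>
     of_int (snd k) * d \<le> snd p \<and> snd p \<le> (of_int (snd k) + 1) * d}"
proof -
  let ?S = "{k \<in> Basis \<rightarrow>\<^sub>E (UNIV :: int set).
      \<exists>x\<in>F. \<forall>b\<in>Basis. of_int (k b) * d \<le> x \<bullet> b \<and> x \<bullet> b \<le> (of_int (k b) + 1) * d}"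
  have B: "(Basis :: (real\<times>real) set) = {(1,0),(0,1)}"
    by (auto simp: Basis_prod_def)
  have inj: "inj_on (\<lambda>k. (k (1,0), k (0,1))) ?S"
    unfolding inj_on_def
  proof (intro ballI impI ext)
    fix k k' b assume k: "k \<in> ?S" and k': "k' \<in> ?S" and eq: "(k (1,0), k (0,1)) = (k' (1::real,0::real), k' (0,1))"
    show "k b = k' b"
    proof (cases "b \<in> Basis")
      case True then show ?thesis using eq True[unfolded B] by auto
    next
      case False then show ?thesis using k k' by (metis (no_types, lifting) PiE_arb mem_Collect_eq)
    qed
  qed
  have img: "(\<lambda>k. (k (1,0), k (0,1))) ` ?S = {k::int\<times>int. \<exists>p\<in>F.
     of_int (fst k) * d \<le> fst p \<and> fst p \<le> (of_int (fst k) + 1) * d \<and>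
     of_int (snd k) * d \<le> snd p \<and> snd p \<le> (of_int (snd k) + 1) * d}"
  proof safe
    fix i j a b assume "(a,b) \<in> F" "of_int (fst (i, j)) * d \<le> fst (a, b)"
       "fst (a, b) \<le> (of_int (fst (i, j)) + 1) * d"
       "of_int (snd (i, j)) * d \<le> snd (a, b)" "snd (a, b) \<le> (of_int (snd (i, j)) + 1) * d"
    then show "(i,j) \<in> (\<lambda>k. (k (1,0), k (0,1))) ` ?S"
      by (intro image_eqI[where x="\<lambda>b. if b = (1,0) then i else if b = (0,1) then j else undefined"])
         (auto simp: B PiE_iff extensional_def inner_Pair intro!: bexI[of _ "(a,b)"])
  qed (force simp: B inner_Pair)
  show ?thesis unfolding grid_count_def using card_image[OF inj] img by simp
qed



definition cells :: "real \<Rightarrow> real set \<Rightarrow> int set" where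
  "cells d X = {i::int. \<exists>x\<in>X. of_int i * d \<le> x \<and> x \<le> (of_int i + 1) * d}"

definition boxes :: "real \<Rightarrow> (real\<times>real) set \<Rightarrow> (int\<times>int) set" where
  "boxes d F = {k::int\<times>int. \<exists>p\<in>F.
     of_int (fst k) * d \<le> fst p \<and> fst p \<le> (of_int (fst k) + 1) * d \<and>
     of_int (snd k) * d \<le> snd p \<and> snd p \<le> (of_int (snd k) + 1) * d}"

lemma gc_real: "grid_count d (F::real set) = card (cells d F)"
  by (simp add: grid_count_real cells_def)

lemma gc_prod: "grid_count d (F::(real\<times>real) set) = card (boxes d F)"
  by (simp add: grid_count_prod boxes_def)

lemma cell_floor:
  assumes "d > 0"
  shows "of_int \<lfloor>x/d\<rfloor> * d \<le> x \<and> x \<le> (of_int \<lfloor>x/d\<rfloor> + 1) * d"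
proof -
  have "of_int \<lfloor>x/d\<rfloor> \<le> x/d" "x/d \<le> of_int \<lfloor>x/d\<rfloor> + 1" by linarith+
  then have "of_int \<lfloor>x/d\<rfloor> * d \<le> x/d * d" "x/d * d \<le> (of_int \<lfloor>x/d\<rfloor> + 1) * d"
    using assms by (intro mult_right_mono; simp)+
  then show ?thesis using assms by simp
qed

lemma cells_subset:
  assumes "d > 0" "X \<subseteq> {lo..hi}"
  shows "cells d X \<subseteq> {\<lfloor>lo/d\<rfloor> - 1 .. \<lceil>hi/d\<rceil>}"
proof
  fix i assume "i \<in> cells d X"
  then obtain x where x: "x \<in> X" "of_int i * d \<le> x" "x \<le> (of_int i + 1) * d"
    by (auto simp: cells_def)
  have "of_int i \<le> hi / d" using x assms by (auto simp: field_simps)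
  then have "i \<le> \<lceil>hi/d\<rceil>" by linarith
  moreover have "lo / d \<le> of_int i + 1" using x assms by (auto simp: field_simps)
  then have "\<lfloor>lo/d\<rfloor> - 1 \<le> i" by linarith
  ultimately show "i \<in> {\<lfloor>lo/d\<rfloor> - 1 .. \<lceil>hi/d\<rceil>}" by simp
qed

lemma cells_finite:
  assumes "d > 0" "X \<subseteq> {lo..hi}"
  shows "finite (cells d X)"
  using cells_subset[OF assms] finite_subset by blast

lemma cells_card_le:
  assumes "d > 0" "X \<subseteq> {lo..hi}" "lo \<le> hi"
  shows "real (card (cells d X)) \<le> (hi - lo)/d + 4"
proof -
  have "card (cells d X) \<le> card {\<lfloor>lo/d\<rfloor> - 1 .. \<lceil>hi/d\<rceil>}"
    by (rule card_mono[OF _ cells_subset[OF assms(1,2)]]) simp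
  also have "\<dots> = nat (\<lceil>hi/d\<rceil> - \<lfloor>lo/d\<rfloor> + 2)" by simp
  finally have c: "real (card (cells d X)) \<le> real (nat (\<lceil>hi/d\<rceil> - \<lfloor>lo/d\<rfloor> + 2))" by linarith
  have "\<lceil>hi/d\<rceil> < hi/d + 1" "lo/d - 1 < \<lfloor>lo/d\<rfloor>" by linarith+
  moreover have "lo/d \<le> hi/d" using assms by (simp add: divide_right_mono)
  ultimately have "real (nat (\<lceil>hi/d\<rceil> - \<lfloor>lo/d\<rfloor> + 2)) \<le> hi/d - lo/d + 4"
    by linarith
  then show ?thesis using c by (simp add: diff_divide_distrib)
qed

lemma cells_nonempty:
  assumes "d > 0" "x \<in> X"
  shows "\<lfloor>x/d\<rfloor> \<in> cells d X"
  using cell_floor[OF assms(1), of x] assms(2) by (auto simp: cells_def)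

lemma boxes_subset: "boxes d F \<subseteq> cells d (fst ` F) \<times> cells d (snd ` F)"
  unfolding boxes_def cells_def by (auto; force)

lemma boxes_finite:
  assumes "d > 0" "fst ` F \<subseteq> {lo..hi}" "snd ` F \<subseteq> {lo2..hi2}"
  shows "finite (boxes d F)"
  using boxes_subset[of d F] cells_finite[OF assms(1,2)] cells_finite[OF assms(1,3)]
  by (meson finite_SigmaI finite_subset)



lemma graph_count_upper:
  assumes X: "X \<subseteq> {0..1}" and ne: "X \<noteq> {}" and B: "\<forall>x\<in>X. \<bar>f x\<bar> \<le> B" and d: "d > 0" and d1: "d \<le> 1"
  shows "real (card (boxes d ((\<lambda>x. (x, f x)) ` X))) \<le> real (card (cells d X)) * ((2+4) * (max B 1) / d)"
proof -
  let ?G = "(\<lambda>x. (x, f x)) ` X"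
  have fst: "fst ` ?G = X" by (force simp: image_image)
  have snd: "snd ` ?G = f ` X" by (force simp: image_image)
  have fX: "f ` X \<subseteq> {-B..B}" using B by (force simp: abs_le_iff)
  have Bge: "B \<ge> 0" using B ne by (meson abs_ge_zero all_not_in_conv order.trans)
  have "card (boxes d ?G) \<le> card (cells d X \<times> cells d (f ` X))"
    using boxes_subset[of d ?G] cells_finite[OF d X] cells_finite[OF d fX]
    by (intro card_mono) (auto simp: fst snd)
  also have "\<dots> = card (cells d X) * card (cells d (f ` X))" by (simp add: card_cartesian_product)
  finally have 1: "real (card (boxes d ?G)) \<le> real (card (cells d X)) * real (card (cells d (f ` X)))"
    by (metis of_nat_le_iff of_nat_mult)
  have "real (card (cells d (f ` X))) \<le> (B - -B)/d + 4" using cells_card_le[OF d fX] Bge by simp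
  also have "\<dots> \<le> (2+4) * (max B 1) / d"
  proof -
    have "1 \<le> max B 1 / d" using d d1 by (simp add: field_simps)
    moreover have "2*B/d \<le> 2 * max B 1 / d" using d by (simp add: divide_right_mono)
    moreover have "(2+4) * max B 1 / d = 2 * max B 1 / d + 4 * (max B 1 / d)" by (simp add: field_simps)
    moreover have "(B - -B)/d = 2*B/d" by simp
    ultimately show ?thesis by linarith
  qed
  finally show ?thesis using 1
    by (smt (verit) mult_left_mono of_nat_0_le_iff)
qed



lemma neg_ln_at_0: "filterlim (\<lambda>d::real. - ln d) at_top (at_right 0)"
  using ln_at_0 filterlim_uminus_at_bot by blast

lemma lnC_tendsto: "((\<lambda>d::real. c / (- ln d)) \<longlongrightarrow> 0) (at_right 0)"
  by (rule tendsto_divide_0[OF tendsto_const filterlim_at_top_imp_at_infinity[OF neg_ln_at_0]])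

lemma ev_small: "eventually (\<lambda>d::real. 0 < d \<and> d < b) (at_right 0)" if "b > 0"
  using that by (auto simp: eventually_at_right_field intro!: exI[of _ b])

lemma ratio_upper:
  assumes X: "X \<subseteq> {0..1}" and ne: "X \<noteq> {}" and B: "\<forall>x\<in>X. \<bar>f x\<bar> \<le> B"
    and d: "d > 0" "d < 1"
  shows "ln (real (card (boxes d ((\<lambda>x. (x, f x)) ` X)))) / - ln d
     \<le> ln (real (card (cells d X))) / - ln d + (1 + ln (6 * max B 1) / - ln d)"
proof -
  let ?NG = "real (card (boxes d ((\<lambda>x. (x, f x)) ` X)))"
  let ?NX = "real (card (cells d X))"
  let ?C = "6 * max B 1"
  have ld: "- ln d > 0" using d by simp
  have NX1: "?NX \<ge> 1"
  proof -
    obtain x where "x \<in> X" using ne by auto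
    then have "cells d X \<noteq> {}" using cells_nonempty[OF d(1)] by blast
    then have "card (cells d X) > 0" using cells_finite[OF d(1) X] by (simp add: card_gt_0_iff)
    then show ?thesis by linarith
  qed
  have C1: "?C \<ge> 1" by simp
  have NG: "?NG \<le> ?NX * (?C / d)" using graph_count_upper[OF X ne B d(1)] d by simp
  have rhs: "(ln ?NX + ln ?C - ln d) / - ln d
      = ln ?NX / - ln d + (1 + ln ?C / - ln d)" using ld by (simp add: field_simps)
  show ?thesis
  proof (cases "?NG = 0")
    case True
    have "0 \<le> ln ?NX" "0 \<le> ln ?C" using NX1 C1 by simp_all
    then have "0 \<le> ln ?NX / - ln d" "0 \<le> ln ?C / - ln d" using ld
      by (metis divide_nonneg_pos)+
    then show ?thesis using True by simp
  next
    case False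
    then have pos: "?NG > 0" by simp
    have "ln ?NG \<le> ln (?NX * (?C / d))" using pos NG by simp
    also have "\<dots> = ln ?NX + ln ?C - ln d" using NX1 d by (simp add: ln_mult ln_div)
    finally have "ln ?NG / - ln d \<le> (ln ?NX + ln ?C - ln d) / - ln d"
      using ld by (metis divide_right_mono less_le)
    then show ?thesis using rhs by simp
  qed
qed

lemma upper_dim_graph:
  fixes X :: "real set" and f :: "real \<Rightarrow> real"
  assumes X: "X \<subseteq> {0..1}" and ne: "X \<noteq> {}" and B: "\<forall>x\<in>X. \<bar>f x\<bar> \<le> B"
  shows "upper_box_dim ((\<lambda>x. (x, f x)) ` X) \<le> upper_box_dim X + 1"
proof -
  define s where "s = upper_box_dim X"
  have s: "s = Limsup (at_right 0) (\<lambda>d. ereal (ln (real (card (cells d X))) / - ln d))"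
    unfolding s_def upper_box_dim_def gc_real ..
  have "Limsup (at_right 0) (\<lambda>d. ereal (ln (real (card (boxes d ((\<lambda>x. (x, f x)) ` X)))) / - ln d)) \<le> s + 1"
    unfolding Limsup_le_iff
  proof (intro allI impI)
    fix y assume y: "s + 1 < y"
    show "\<forall>\<^sub>F d in at_right 0. ereal (ln (real (card (boxes d ((\<lambda>x. (x, f x)) ` X)))) / - ln d) < y"
    proof (cases y)
      case PInf then show ?thesis by simp
    next
      case MInf then show ?thesis using y by simp
    next
      case (real r)
      have "s < ereal (r - 1)" using y real by (cases s) auto
      then obtain z where z: "s < ereal z" "ereal z < ereal (r - 1)" using ereal_dense2 by blast
      have e1: "\<forall>\<^sub>F d in at_right 0. ereal (ln (real (card (cells d X))) / - ln d) < ereal z"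
        using Limsup_lessD[OF z(1)[unfolded s]] .
      have "r - 1 - z > 0" using z by simp
      then have e2: "\<forall>\<^sub>F d in at_right 0. ln (6 * max B 1) / - ln d < r - 1 - z"
        using order_tendstoD(2)[OF lnC_tendsto] by blast
      have e3: "\<forall>\<^sub>F d in at_right 0. 0 < d \<and> d < (1::real)" by (rule ev_small) simp
      show ?thesis
      proof (rule eventually_mono[OF eventually_conj[OF e1 eventually_conj[OF e2 e3]]])
        fix d :: real assume H: "ereal (ln (real (card (cells d X))) / - ln d) < ereal z \<and>
          ln (6 * max B 1) / - ln d < r - 1 - z \<and> 0 < d \<and> d < 1"
        then show "ereal (ln (real (card (boxes d ((\<lambda>x. (x, f x)) ` X)))) / - ln d) < y"
          using ratio_upper[OF X ne B, of d] real by simp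
      qed
    qed
  qed
  then show ?thesis unfolding s_def upper_box_dim_def gc_prod gc_real by simp
qed



definition good :: "real \<Rightarrow> real set \<Rightarrow> int set" where
  "good d X = {i. \<exists>x\<in>X. x islimpt X \<and> of_int i * d \<le> x \<and> x \<le> (of_int i + 1) * d}"

lemma cell_cand:
  assumes "d > 0" "of_int i * d \<le> x" "x \<le> (of_int i + 1) * d"
  shows "i \<in> {\<lfloor>x/d\<rfloor> - 1, \<lfloor>x/d\<rfloor>}"
proof -
  have "of_int i \<le> x/d" using assms by (simp add: field_simps)
  moreover have "x/d \<le> of_int i + 1" using assms by (simp add: field_simps)
  ultimately have "i \<le> \<lfloor>x/d\<rfloor>" "\<lfloor>x/d\<rfloor> \<le> i + 1"
    by (simp add: le_floor_iff, simp add: floor_le_iff)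
  then show ?thesis by auto
qed

lemma good_count:
  fixes X :: "real set"
  assumes X: "X \<subseteq> {0..1}" and fin: "finite {x \<in> X. \<not> x islimpt X}" and inf: "infinite X"
    and d: "d > 0"
  shows "good d X \<subseteq> cells d X" "finite (good d X)" "good d X \<noteq> {}"
    "real (card (cells d X)) \<le> (1 + 2 * real (card {x \<in> X. \<not> x islimpt X})) * real (card (good d X))"
proof -
  let ?I = "{x \<in> X. \<not> x islimpt X}"
  show sub: "good d X \<subseteq> cells d X" by (auto simp: good_def cells_def)
  show fg: "finite (good d X)" using finite_subset[OF sub cells_finite[OF d X]] .
  have "infinite (X - ?I)" using inf fin by (metis Diff_infinite_finite)
  then have "X - ?I \<noteq> {}" by (metis finite.emptyI)
  then obtain x where x: "x \<in> X" "x islimpt X" by auto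
  then show ne: "good d X \<noteq> {}" using cell_floor[OF d, of x] unfolding good_def by blast
  have "cells d X \<subseteq> good d X \<union> (\<Union>x\<in>?I. {\<lfloor>x/d\<rfloor> - 1, \<lfloor>x/d\<rfloor>})"
  proof
    fix i assume "i \<in> cells d X"
    then obtain x where x: "x \<in> X" "of_int i * d \<le> x" "x \<le> (of_int i + 1) * d" by (auto simp: cells_def)
    show "i \<in> good d X \<union> (\<Union>x\<in>?I. {\<lfloor>x/d\<rfloor> - 1, \<lfloor>x/d\<rfloor>})"
    proof (cases "x islimpt X")
      case True then show ?thesis using x by (auto simp: good_def)
    next
      case False then show ?thesis using x cell_cand[OF d x(2,3)] by blast
    qed
  qed
  then have "card (cells d X) \<le> card (good d X \<union> (\<Union>x\<in>?I. {\<lfloor>x/d\<rfloor> - 1, \<lfloor>x/d\<rfloor>}))"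
    using fg fin by (intro card_mono) auto
  also have "\<dots> \<le> card (good d X) + card (\<Union>x\<in>?I. {\<lfloor>x/d\<rfloor> - 1, \<lfloor>x/d\<rfloor>})"
    by (rule card_Un_le)
  also have "card (\<Union>x\<in>?I. {\<lfloor>x/d\<rfloor> - 1, \<lfloor>x/d\<rfloor>}) \<le> (\<Sum>x\<in>?I. card {\<lfloor>x/d\<rfloor> - 1, \<lfloor>x/d\<rfloor>})"
    by (rule card_UN_le[OF fin])
  also have "\<dots> \<le> (\<Sum>x\<in>?I. 2)" by (intro sum_mono) (simp add: card_insert_le_m1)
  also have "\<dots> = 2 * card ?I" by simp
  finally have c: "card (cells d X) \<le> card (good d X) + 2 * card ?I" by simp
  have g1: "card (good d X) \<ge> 1" using ne fg by (simp add: Suc_leI card_gt_0_iff)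
  have "real (card (cells d X)) \<le> real (card (good d X)) + 2 * real (card ?I)"
    using c by linarith
  also have "\<dots> \<le> (1 + 2 * real (card ?I)) * real (card (good d X))"
  proof -
    have "2 * real (card ?I) * 1 \<le> 2 * real (card ?I) * real (card (good d X))"
      using g1 by (intro mult_left_mono) auto
    then show ?thesis by (simp add: algebra_simps)
  qed
  finally show "real (card (cells d X)) \<le> (1 + 2 * real (card ?I)) * real (card (good d X))" .
qed

lemma residue_class:
  fixes S :: "int set"
  assumes "finite S"
  shows "\<exists>r. real (card S) \<le> 3 * real (card {i\<in>S. i mod 3 = r})"
proof -
  have S: "S = {i\<in>S. i mod 3 = 0} \<union> {i\<in>S. i mod 3 = 1} \<union> {i\<in>S. i mod 3 = 2}" by auto
  have "card S \<le> card {i\<in>S. i mod 3 = 0} + card {i\<in>S. i mod 3 = 1} + card {i\<in>S. i mod 3 = 2}"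
    by (subst S) (meson add_le_mono card_Un_le le_refl order_trans)
  then have "real (card S) \<le> real (card {i\<in>S. i mod 3 = 0}) + real (card {i\<in>S. i mod 3 = 1}) + real (card {i\<in>S. i mod 3 = 2})"
    by linarith
  then have "real (card S) \<le> 3 * real (card {i\<in>S. i mod 3 = 0}) \<or> real (card S) \<le> 3 * real (card {i\<in>S. i mod 3 = 1})
     \<or> real (card S) \<le> 3 * real (card {i\<in>S. i mod 3 = 2})" by linarith
  then show ?thesis by blast
qed



lemma floor_eq_close1:
  fixes u v :: real
  assumes "\<lfloor>u\<rfloor> = \<lfloor>v\<rfloor>"
  shows "\<bar>u - v\<bar> < 1"
  using assms by linarith

lemma floor_eq_close:
  fixes a b d :: real
  assumes "d > 0" "\<lfloor>a/d\<rfloor> = \<lfloor>b/d\<rfloor>"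
  shows "\<bar>a - b\<bar> < d"
proof -
  have "\<bar>a/d - b/d\<bar> < 1" by (rule floor_eq_close1[OF assms(2)])
  moreover have "a/d - b/d = (a - b)/d" by (simp add: diff_divide_distrib)
  ultimately have "\<bar>(a - b)/d\<bar> < 1" by (simp only:)
  moreover have ad: "\<bar>d\<bar> = d" using assms(1) by simp
  have "\<bar>(a - b)/d\<bar> = \<bar>a - b\<bar>/d" by (simp only: abs_divide ad)
  ultimately have "\<bar>a - b\<bar>/d < 1" by (simp only:)
  then show ?thesis using assms(1) by (simp add: divide_less_eq)
qed
lemma inj_points:
  fixes M :: nat
  assumes "infinite S"
  shows "\<exists>p. inj_on p {..<M} \<and> p ` {..<M} \<subseteq> S"
proof -
  obtain T where T: "finite T" "card T = M" "T \<subseteq> S" using infinite_arbitrarily_large[OF assms] by blast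
  obtain h where "bij_betw h {0..<card T} T" using ex_bij_betw_nat_finite[OF T(1)] by blast
  then show ?thesis using T by (auto simp: bij_betw_def lessThan_atLeast0)
qed

lemma min_sep:
  fixes P :: "real set"
  assumes "finite P"
  shows "\<exists>r>0. \<forall>p\<in>P. \<forall>q\<in>P. p \<noteq> q \<longrightarrow> r \<le> \<bar>p - q\<bar>"
proof -
  define D where "D = insert 1 ((\<lambda>(p,q). \<bar>p - q\<bar>) ` {(p,q). p \<in> P \<and> q \<in> P \<and> p \<noteq> q})"
  have fD: "finite D" unfolding D_def
    by (rule finite_insert[THEN iffD2], rule finite_imageI, rule finite_subset[of _ "P \<times> P"]) (use assms in auto)
  have pos: "\<forall>x\<in>D. x > 0" by (auto simp: D_def)
  have "Min D > 0" using fD pos by (simp add: D_def)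
  moreover have "\<forall>p\<in>P. \<forall>q\<in>P. p \<noteq> q \<longrightarrow> Min D \<le> \<bar>p - q\<bar>"
    using fD by (auto simp: D_def intro!: Min_le)
  ultimately show ?thesis by blast
qed

lemma cells_apart:
  fixes d x x' :: real and i i' :: int
  assumes "d > 0" "of_int i*d \<le> x" "x \<le> (of_int i + 1)*d" "of_int i'*d \<le> x'" "x' \<le> (of_int i' + 1)*d"
    "3 \<le> \<bar>i - i'\<bar>"
  shows "2*d \<le> \<bar>x - x'\<bar>"
proof (cases "i' \<ge> i + 3")
  case True
  then have "of_int i' \<ge> of_int i + (3::real)" by linarith
  then have "of_int i' * d \<ge> (of_int i + 3) * d" using assms(1) by (intro mult_right_mono) auto
  then show ?thesis using assms by (simp add: algebra_simps)
next
  case False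
  then have "i \<ge> i' + 3" using assms(6) by linarith
  then have "of_int i \<ge> of_int i' + (3::real)" by linarith
  then have "of_int i * d \<ge> (of_int i' + 3) * d" using assms(1) by (intro mult_right_mono) auto
  then show ?thesis using assms by (simp add: algebra_simps)
qed

lemma same_res_apart:
  fixes i i' r :: int
  assumes "i mod 3 = r" "i' mod 3 = r" "i \<noteq> i'"
  shows "3 \<le> \<bar>i - i'\<bar>"
proof -
  have "3 dvd i - i'" using assms by (metis mod_eq_dvd_iff)
  then obtain k where k: "i - i' = 3 * k" by blast
  then have "k \<noteq> 0" using assms by auto
  then show ?thesis using k by (auto simp: abs_mult)
qed



lemma M_bounds:
  fixes d \<epsilon> :: real
  assumes d: "0 < d" "d < 1" and eps: "0 < \<epsilon>" "\<epsilon> \<le> 1/4" and small: "18 \<le> d powr (-\<epsilon>)"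
  shows "d powr (\<epsilon> - 1) / 6 \<le> real (nat \<lfloor>d powr (\<epsilon> - 1) / 3\<rfloor>)"
    "\<And>j. j < nat \<lfloor>d powr (\<epsilon> - 1) / 3\<rfloor> \<Longrightarrow> 3 * d * real j < d powr \<epsilon>"
proof -
  have "d powr (-\<epsilon>) \<le> d powr (\<epsilon> - 1)" using d eps by (intro powr_mono') auto
  then have q: "6 \<le> d powr (\<epsilon> - 1) / 3" using small by simp
  then have "real (nat \<lfloor>d powr (\<epsilon> - 1) / 3\<rfloor>) = of_int \<lfloor>d powr (\<epsilon> - 1) / 3\<rfloor>" by simp
  then show "d powr (\<epsilon> - 1) / 6 \<le> real (nat \<lfloor>d powr (\<epsilon> - 1) / 3\<rfloor>)" using q by linarith
  fix j :: nat assume j: "j < nat \<lfloor>d powr (\<epsilon> - 1) / 3\<rfloor>"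
  then have "real j + 1 \<le> d powr (\<epsilon> - 1) / 3" by linarith
  then have "3 * d * (real j + 1) \<le> 3 * d * (d powr (\<epsilon> - 1) / 3)" using d by (intro mult_left_mono) auto
  also have "\<dots> = d powr (\<epsilon> - 1) * d powr 1" using d by simp
  also have "\<dots> = d powr (\<epsilon> - 1 + 1)" by (simp only: powr_add)
  also have "\<dots> = d powr \<epsilon>" by simp
  finally show "3 * d * real j < d powr \<epsilon>" using d by (simp add: algebra_simps)
qed

lemma final_arith:
  fixes d \<epsilon> a K NC NG NS NM :: real
  assumes d: "0 < d" "d < 1" and K: "K \<ge> 1"
    and cG: "NC \<le> K * NG" and rG: "NG \<le> 3 * NS" and N: "d powr (-a) \<le> NC"
    and small: "18 * K \<le> d powr (-\<epsilon>)" and M: "d powr (\<epsilon> - 1) / 6 \<le> NM"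
  shows "d powr (-(a + 1 - 2*\<epsilon>)) \<le> NS * NM"
proof -
  have "K * NG \<le> K * (3 * NS)" using rG K by (intro mult_left_mono) auto
  then have "d powr (-a) \<le> (3*K) * NS" using cG N by (simp add: mult_ac)
  then have p1: "d powr (-a) / (3*K) \<le> NS" using K by (subst pos_divide_le_eq) (auto simp: mult_ac)
  have p0: "0 \<le> d powr (-a) / (3*K)" using K by simp
  have "d powr (-a) / (3*K) * (d powr (\<epsilon> - 1) / 6) \<le> NS * NM"
    using p1 M p0 by (intro mult_mono) auto
  moreover have "d powr (-a) / (3*K) * (d powr (\<epsilon> - 1) / 6) = (d powr (-a) * d powr (\<epsilon> - 1)) * (1 / (18 * K))"
    by simp
  moreover have "(d powr (-a) * d powr (\<epsilon> - 1)) * d powr \<epsilon> \<le> (d powr (-a) * d powr (\<epsilon> - 1)) * (1 / (18 * K))"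
  proof -
    have "d powr \<epsilon> * (18 * K) \<le> d powr \<epsilon> * d powr (-\<epsilon>)" using small by (intro mult_left_mono) auto
    also have "\<dots> = 1" using d by (simp add: powr_minus)
    finally have "d powr \<epsilon> \<le> 1 / (18 * K)" using K by (subst pos_le_divide_eq) auto
    then show ?thesis by (intro mult_left_mono) auto
  qed
  moreover have "(d powr (-a) * d powr (\<epsilon> - 1)) * d powr \<epsilon> = d powr (-a + (\<epsilon> - 1) + \<epsilon>)"
    by (simp only: powr_add)
  moreover have "-a + (\<epsilon> - 1) + \<epsilon> = -(a + 1 - 2*\<epsilon>)" by simp
  ultimately show ?thesis by (metis order_trans)
qed



definition tent :: "real \<Rightarrow> real \<Rightarrow> real \<Rightarrow> real" where
  "tent rr p x = max 0 (1 - \<bar>x - p\<bar> / rr)"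

lemma tent_cont: "rr > 0 \<Longrightarrow> continuous_on UNIV (tent rr p)"
  unfolding tent_def by (intro continuous_intros) auto

lemma tent_nonneg: "0 \<le> tent rr p x" unfolding tent_def by simp

lemma tent_self: "tent rr p p = 1" unfolding tent_def by simp

lemma tent_far: "rr > 0 \<Longrightarrow> rr \<le> \<bar>x - p\<bar> \<Longrightarrow> tent rr p x = 0"
  unfolding tent_def by (simp add: divide_le_eq)

lemma contra_aux:
  fixes d A B F1 F2 g1 g2 g0 :: real
  assumes "3 * d \<le> \<bar>A - B\<bar>" "\<bar>F1 - F2\<bar> < d" "\<bar>g1 - g0\<bar> < d / 4" "\<bar>g2 - g0\<bar> < d / 4"
    "g1 + A \<le> F1" "F1 \<le> g1 + A + d/2" "g2 + B \<le> F2" "F2 \<le> g2 + B + d/2"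
  shows False
proof (cases "A - B \<ge> 0")
  case True then show ?thesis using assms by (simp add: abs_less_iff)
next
  case False then show ?thesis using assms by (simp add: abs_less_iff)
qed

lemma stage:
  fixes X :: "real set" and g :: "real \<Rightarrow> real" and a \<epsilon> d :: real
  assumes X: "X \<subseteq> {0..1}" and fin: "finite {x\<in>X. \<not> x islimpt X}" and inf: "infinite X"
   and g: "continuous_on UNIV g" and eps: "0 < \<epsilon>" "\<epsilon> \<le> 1/4" and d: "0 < d" "d < 1"
   and N: "d powr (-a) \<le> real (card (cells d X))"
   and small: "18 * (1 + 2 * real (card {x\<in>X. \<not> x islimpt X})) \<le> d powr (-\<epsilon>)"
  shows "\<exists>\<phi>. continuous_on UNIV \<phi> \<and> (\<forall>x. 0 \<le> \<phi> x \<and> \<phi> x \<le> d powr \<epsilon>) \<and>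
     (\<forall>F. (\<forall>x\<in>X. g x + \<phi> x \<le> F x \<and> F x \<le> g x + \<phi> x + d/2) \<longrightarrow>
        d powr (-(a + 1 - 2*\<epsilon>)) \<le> real (card (boxes d ((\<lambda>x. (x, F x)) ` X))))"
proof -
  define K where "K = 1 + 2 * real (card {x\<in>X. \<not> x islimpt X})"
  have K1: "K \<ge> 1" by (simp add: K_def)
  note gc = good_count[OF X fin inf d(1)]
  obtain r where r: "real (card (good d X)) \<le> 3 * real (card {i\<in>good d X. i mod 3 = r})"
    using residue_class[OF gc(2)] by blast
  define G where "G = {i\<in>good d X. i mod 3 = r}"
  have finG: "finite G" using gc(2) unfolding G_def by auto
  have Gsep: "3 \<le> \<bar>i - i'\<bar>" if "i \<in> G" "i' \<in> G" "i \<noteq> i'" for i i'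
    using that same_res_apart[of i r i'] unfolding G_def by auto
  have "\<forall>i\<in>G. \<exists>x. x \<in> X \<and> x islimpt X \<and> of_int i * d \<le> x \<and> x \<le> (of_int i + 1) * d"
    unfolding G_def good_def by blast
  then obtain xc where xc: "\<And>i. i \<in> G \<Longrightarrow> xc i \<in> X \<and> xc i islimpt X \<and> of_int i * d \<le> xc i \<and> xc i \<le> (of_int i + 1) * d"
    by metis
  have "\<forall>i\<in>G. \<exists>\<rho>. 0 < \<rho> \<and> \<rho> \<le> d/2 \<and> (\<forall>y. \<bar>y - xc i\<bar> < \<rho> \<longrightarrow> \<bar>g y - g (xc i)\<bar> < d/4)"
  proof
    fix i assume "i \<in> G"
    have "continuous (at (xc i)) g" using g by (simp add: continuous_on_eq_continuous_at)
    then obtain \<rho> where "\<rho> > 0" "\<forall>y. dist y (xc i) < \<rho> \<longrightarrow> dist (g y) (g (xc i)) < d/4"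
      unfolding continuous_at_eps_delta using d by (metis zero_less_divide_iff zero_less_numeral)
    then show "\<exists>\<rho>. 0 < \<rho> \<and> \<rho> \<le> d/2 \<and> (\<forall>y. \<bar>y - xc i\<bar> < \<rho> \<longrightarrow> \<bar>g y - g (xc i)\<bar> < d/4)"
      using d by (intro exI[of _ "min \<rho> (d/2)"]) (auto simp: dist_real_def)
  qed
  then obtain \<rho> where \<rho>: "\<And>i. i \<in> G \<Longrightarrow> 0 < \<rho> i \<and> \<rho> i \<le> d/2 \<and> (\<forall>y. \<bar>y - xc i\<bar> < \<rho> i \<longrightarrow> \<bar>g y - g (xc i)\<bar> < d/4)"
    by metis
  define M where "M = nat \<lfloor>d powr (\<epsilon> - 1) / 3\<rfloor>"
  have "\<forall>i\<in>G. \<exists>p. inj_on p {..<M} \<and> p ` {..<M} \<subseteq> X \<inter> ball (xc i) (\<rho> i)"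
  proof
    fix i assume i: "i \<in> G"
    have "infinite (X \<inter> ball (xc i) (\<rho> i))" using xc[OF i] \<rho>[OF i] islimpt_eq_infinite_ball by blast
    then show "\<exists>p. inj_on p {..<M} \<and> p ` {..<M} \<subseteq> X \<inter> ball (xc i) (\<rho> i)" by (rule inj_points)
  qed
  then obtain pt where pt: "\<And>i. i \<in> G \<Longrightarrow> inj_on (pt i) {..<M} \<and> pt i ` {..<M} \<subseteq> X \<inter> ball (xc i) (\<rho> i)"
    by metis
  define I where "I = G \<times> {..<M}"
  have finI: "finite I" using finG by (simp add: I_def)
  have ptX: "pt i j \<in> X" if "(i,j) \<in> I" for i j using pt that by (auto simp: I_def)
  have ptclose: "\<bar>pt i j - xc i\<bar> < \<rho> i" if "(i,j) \<in> I" for i j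
    using pt[of i] that by (auto simp: I_def dist_real_def abs_minus_commute)
  have far: "d < \<bar>pt i j - pt i' j'\<bar>" if "(i,j) \<in> I" "(i',j') \<in> I" "i \<noteq> i'" for i j i' j'
  proof -
    have ii: "i \<in> G" "i' \<in> G" using that by (auto simp: I_def)
    have "2*d \<le> \<bar>xc i - xc i'\<bar>"
      using cells_apart[OF d(1), where x="xc i" and x'="xc i'" and i=i and i'=i'] xc[OF ii(1)] xc[OF ii(2)] Gsep[OF ii that(3)] by blast
    moreover have "\<bar>pt i j - xc i\<bar> < d/2" "\<bar>pt i' j' - xc i'\<bar> < d/2"
      using ptclose[OF that(1)] ptclose[OF that(2)] \<rho>[OF ii(1)] \<rho>[OF ii(2)] by auto
    ultimately show ?thesis by linarith
  qed
  have injI: "inj_on (\<lambda>(i,j). pt i j) I"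
  proof (rule inj_onI, clarify)
    fix i j i' j' assume H: "(i,j) \<in> I" "(i',j') \<in> I" "pt i j = pt i' j'"
    have "i = i'" using far[OF H(1,2)] H(3) d by fastforce
    moreover have "j = j'" using pt[of i] H \<open>i = i'\<close> by (auto simp: I_def inj_on_def)
    ultimately show "i = i' \<and> j = j'" by simp
  qed
  define P where "P = (\<lambda>(i,j). pt i j) ` I"
  obtain rr where rr: "rr > 0" "\<forall>p\<in>P. \<forall>q\<in>P. p \<noteq> q \<longrightarrow> rr \<le> \<bar>p - q\<bar>"
    using min_sep[of P] finI P_def by auto
  define S where "S x = (\<Sum>(i,j)\<in>I. (3 * d * real j) * tent rr (pt i j) x)" for x
  define \<phi> where "\<phi> x = min (d powr \<epsilon>) (S x)" for x
  have S_nonneg: "0 \<le> S x" for x unfolding S_def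
    by (intro sum_nonneg) (auto intro!: mult_nonneg_nonneg tent_nonneg simp: d(1) less_imp_le)
  have S_at: "S (pt i j) = 3 * d * real j" if ij: "(i,j) \<in> I" for i j
  proof -
    have "S (pt i j) = (3 * d * real j) * tent rr (pt i j) (pt i j) +
        (\<Sum>(i',j')\<in>I - {(i,j)}. (3 * d * real j') * tent rr (pt i' j') (pt i j))"
      unfolding S_def using finI ij by (subst sum.remove[of _ "(i,j)"]) auto
    moreover have "(\<Sum>(i',j')\<in>I - {(i,j)}. (3 * d * real j') * tent rr (pt i' j') (pt i j)) = 0"
    proof (intro sum.neutral ballI)
      fix q assume q: "q \<in> I - {(i,j)}"
      obtain i' j' where q': "q = (i',j')" by fastforce
      have "pt i' j' \<noteq> pt i j" using injI q q' ij by (auto simp: inj_on_def)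
      moreover have "pt i' j' \<in> P" "pt i j \<in> P" using q q' ij by (auto simp: P_def)
      ultimately have "rr \<le> \<bar>pt i j - pt i' j'\<bar>" using rr by metis
      then show "(case q of (i', j') \<Rightarrow> 3 * d * real j' * tent rr (pt i' j') (pt i j)) = 0"
        using q' tent_far[OF rr(1)] by simp
    qed
    ultimately show ?thesis by (simp add: tent_self)
  qed
  have Mb: "d powr (\<epsilon> - 1) / 6 \<le> real M" "\<And>j. j < M \<Longrightarrow> 3 * d * real j < d powr \<epsilon>"
    using M_bounds[OF d eps] small unfolding M_def by (auto intro: order_trans[OF _ small])
  have phi_at: "\<phi> (pt i j) = 3 * d * real j" if ij: "(i,j) \<in> I" for i j
    using S_at[OF ij] Mb(2)[of j] ij by (auto simp: \<phi>_def I_def)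
  have cont: "continuous_on UNIV \<phi>"
    unfolding \<phi>_def S_def by (intro continuous_intros continuous_on_sum) (auto intro!: continuous_on_mult_left tent_cont[OF rr(1)])
  have bnd: "\<forall>x. 0 \<le> \<phi> x \<and> \<phi> x \<le> d powr \<epsilon>" using S_nonneg by (simp add: \<phi>_def)
  have key: "d powr (-(a + 1 - 2*\<epsilon>)) \<le> real (card (boxes d ((\<lambda>x. (x, F x)) ` X)))"
    if H: "\<forall>x\<in>X. g x + \<phi> x \<le> F x \<and> F x \<le> g x + \<phi> x + d/2" for F
  proof -
    obtain Bg where Bg: "\<And>x. x \<in> {0..1} \<Longrightarrow> norm (g x) \<le> Bg"
      using continuous_on_compact_bound[OF compact_Icc continuous_on_subset[OF g subset_UNIV]] by metis
    define Gr where "Gr = (\<lambda>x. (x, F x)) ` X"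
    have fG: "fst ` Gr \<subseteq> {0..1}" using X by (auto simp: Gr_def)
    have sG: "snd ` Gr \<subseteq> {-(Bg + d powr \<epsilon> + d) .. Bg + d powr \<epsilon> + d}"
    proof
      fix y assume "y \<in> snd ` Gr"
      then obtain x where x: "x \<in> X" "y = F x" by (auto simp: Gr_def)
      have "\<bar>g x\<bar> \<le> Bg" using Bg[of x] x X by auto
      moreover have "0 \<le> \<phi> x" "\<phi> x \<le> d powr \<epsilon>" using bnd by auto
      ultimately show "y \<in> {-(Bg + d powr \<epsilon> + d) .. Bg + d powr \<epsilon> + d}"
        using H x d by (auto simp: abs_le_iff)
    qed
    have finB: "finite (boxes d Gr)" by (rule boxes_finite[OF d(1) fG sG])
    define bx where "bx = (\<lambda>(i,j). (\<lfloor>pt i j / d\<rfloor>, \<lfloor>F (pt i j) / d\<rfloor>))"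
    have bxB: "bx ` I \<subseteq> boxes d Gr"
    proof
      fix y assume "y \<in> bx ` I"
      then obtain i j where ij: "(i,j) \<in> I" and y: "y = bx (i,j)" by auto
      have "(pt i j, F (pt i j)) \<in> Gr" using ptX[OF ij] by (auto simp: Gr_def)
      then show "y \<in> boxes d Gr" unfolding y
        unfolding boxes_def bx_def using cell_floor[OF d(1), of "pt i j"] cell_floor[OF d(1), of "F (pt i j)"]
        by (auto intro!: bexI[of _ "(pt i j, F (pt i j))"])
    qed
    have bxinj: "inj_on bx I"
    proof (rule inj_onI, clarify)
      fix i j i' j' assume ij: "(i,j) \<in> I" and ij': "(i',j') \<in> I" and eq: "bx (i,j) = bx (i',j')"
      have e1: "\<bar>pt i j - pt i' j'\<bar> < d" using eq floor_eq_close[OF d(1)] by (simp add: bx_def)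
      have e2: "\<bar>F (pt i j) - F (pt i' j')\<bar> < d" using eq floor_eq_close[OF d(1)] by (simp add: bx_def)
      have ii: "i = i'" using far[OF ij ij'] e1 by fastforce
      have iG: "i \<in> G" using ij by (auto simp: I_def)
      have g1: "\<bar>g (pt i j) - g (xc i)\<bar> < d/4" using \<rho>[OF iG] ptclose[OF ij] by blast
      have g2: "\<bar>g (pt i j') - g (xc i)\<bar> < d/4" using \<rho>[OF iG] ptclose[of i j'] ij' ii by blast
      have F1: "g (pt i j) + 3*d*real j \<le> F (pt i j)" "F (pt i j) \<le> g (pt i j) + 3*d*real j + d/2"
        using H ptX[OF ij] phi_at[OF ij] by auto
      have F2: "g (pt i j') + 3*d*real j' \<le> F (pt i j')" "F (pt i j') \<le> g (pt i j') + 3*d*real j' + d/2"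
        using H ptX[of i j'] ij' ii phi_at[of i j'] by auto
      have "j = j'"
      proof (rule ccontr)
        assume "j \<noteq> j'"
        then have "3*d \<le> \<bar>3*d*real j - 3*d*real j'\<bar>"
        proof (cases "j < j'")
          case True
          then have "real j + 1 \<le> real j'" by simp
          then have "3*d*(real j + 1) \<le> 3*d*real j'" using d by (intro mult_left_mono) auto
          then show ?thesis by (simp add: algebra_simps)
        next
          case False
          then have "real j' + 1 \<le> real j" using \<open>j \<noteq> j'\<close> by simp
          then have "3*d*(real j' + 1) \<le> 3*d*real j" using d by (intro mult_left_mono) auto
          then show ?thesis by (simp add: algebra_simps)
        qed
        then show False using contra_aux[OF _ e2[folded ii] g1 g2 F1 F2] by blast
      qed
      then show "i = i' \<and> j = j'" using ii by simp
    qed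
    have "card I = card G * M" by (simp add: I_def card_cartesian_product)
    moreover have "card (bx ` I) = card I" using card_image[OF bxinj] .
    moreover have "card (bx ` I) \<le> card (boxes d Gr)" using card_mono[OF finB bxB] .
    ultimately have cB: "real (card G) * real M \<le> real (card (boxes d Gr))"
      by (metis of_nat_le_iff of_nat_mult)
    have "d powr (-(a + 1 - 2*\<epsilon>)) \<le> real (card G) * real M"
    proof (rule final_arith[OF d K1 _ _ N _ Mb(1)])
      show "real (card (cells d X)) \<le> K * real (card (good d X))" using gc(4) by (simp add: K_def)
      show "real (card (good d X)) \<le> 3 * real (card G)" using r by (simp add: G_def)
      show "18 * K \<le> d powr - \<epsilon>" using small by (simp add: K_def)
    qed
    then show ?thesis using cB by (simp add: Gr_def)
  qed
  show ?thesis using cont bnd key by blast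
qed



lemma uc_subset: "uniformly_continuous_on S (f::real\<Rightarrow>real) \<Longrightarrow> T \<subseteq> S \<Longrightarrow> uniformly_continuous_on T f"
  unfolding uniformly_continuous_on_def by (meson subsetD)

lemma freq:
  fixes X :: "real set"
  assumes X: "X \<subseteq> {0..1}" and ne: "X \<noteq> {}" and a: "ereal a < upper_box_dim X" and eta: "\<eta> > 0"
  shows "\<exists>d. 0 < d \<and> d < \<eta> \<and> d powr (-a) \<le> real (card (cells d X))"
proof (rule ccontr)
  assume H: "\<not> ?thesis"
  have "\<forall>\<^sub>F d in at_right 0. ereal (ln (real (grid_count d X)) / - ln d) \<le> ereal a"
  proof (rule eventually_mono[OF ev_small[of "min \<eta> 1"]])
    show "0 < min \<eta> 1" using eta by simp
    fix d :: real assume d: "0 < d \<and> d < min \<eta> 1"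
    have N: "real (card (cells d X)) < d powr (-a)" using H d by force
    have N1: "real (card (cells d X)) \<ge> 1"
    proof -
      obtain x where "x \<in> X" using ne by auto
      then have "cells d X \<noteq> {}" using cells_nonempty d by blast
      then have "card (cells d X) > 0" using cells_finite[of d X 0 1] X d by (simp add: card_gt_0_iff)
      then show ?thesis by linarith
    qed
    have ld: "- ln d > 0" using d by simp
    have "ln (real (card (cells d X))) < ln (d powr (-a))" using N N1 by (subst ln_less_cancel_iff) auto
    also have "\<dots> = -a * ln d" using d by (simp add: ln_powr)
    finally have "ln (real (card (cells d X))) < a * (- ln d)" by simp
    then have "ln (real (card (cells d X))) / - ln d < a" using ld by (simp only: pos_divide_less_eq)
    then show "ereal (ln (real (grid_count d X)) / - ln d) \<le> ereal a" by (simp add: gc_real)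
  qed
  then have "upper_box_dim X \<le> ereal a" unfolding upper_box_dim_def by (rule Limsup_bounded)
  then show False using a by simp
qed

lemma step:
  fixes X :: "real set" and g :: "real \<Rightarrow> real"
  assumes X: "X \<subseteq> {0..1}" and fin: "finite {x\<in>X. \<not> x islimpt X}" and inf: "infinite X"
   and g: "continuous_on UNIV g" and eps: "0 < \<epsilon>" "\<epsilon> \<le> 1/4" and a: "ereal a < upper_box_dim X"
   and eta: "\<eta> > 0"
  shows "\<exists>d \<phi>. 0 < d \<and> d < \<eta> \<and> continuous_on UNIV \<phi> \<and> (\<forall>x. 0 \<le> \<phi> x \<and> \<phi> x \<le> d powr \<epsilon>) \<and>
     (\<forall>F. (\<forall>x\<in>X. g x + \<phi> x \<le> F x \<and> F x \<le> g x + \<phi> x + d/2) \<longrightarrow>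
        d powr (-(a + 1 - 2*\<epsilon>)) \<le> real (card (boxes d ((\<lambda>x. (x, F x)) ` X))))"
proof -
  define K where "K = 18 * (1 + 2 * real (card {x\<in>X. \<not> x islimpt X}))"
  have K: "K \<ge> 18" by (simp add: K_def)
  define \<eta>0 where "\<eta>0 = K powr (-1/\<epsilon>)"
  have \<eta>0: "\<eta>0 > 0" using K by (simp add: \<eta>0_def)
  have ne: "X \<noteq> {}" using inf by auto
  obtain d where d: "0 < d" "d < min \<eta> (min (1/2) \<eta>0)" "d powr (-a) \<le> real (card (cells d X))"
    using freq[OF X ne a, of "min \<eta> (min (1/2) \<eta>0)"] eta \<eta>0 by auto
  have "\<eta>0 powr (-\<epsilon>) < d powr (-\<epsilon>)" using d eps by (intro powr_less_mono2_neg) auto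
  moreover have "\<eta>0 powr (-\<epsilon>) = K" using K eps by (simp add: \<eta>0_def powr_powr)
  ultimately have small: "K \<le> d powr (-\<epsilon>)" by simp
  obtain \<phi> where "continuous_on UNIV \<phi> \<and> (\<forall>x. 0 \<le> \<phi> x \<and> \<phi> x \<le> d powr \<epsilon>) \<and>
     (\<forall>F. (\<forall>x\<in>X. g x + \<phi> x \<le> F x \<and> F x \<le> g x + \<phi> x + d/2) \<longrightarrow>
        d powr (-(a + 1 - 2*\<epsilon>)) \<le> real (card (boxes d ((\<lambda>x. (x, F x)) ` X))))"
    using stage[OF X fin inf g eps, of d a] d small by (auto simp: K_def)
  then show ?thesis using d by (intro exI[of _ d] exI[of _ \<phi>]) auto
qed



lemma ratio_lower:
  fixes d e :: real
  assumes d: "0 < d" "d < 1" and N: "d powr e \<le> real N"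
  shows "- e \<le> ln (real N) / - ln d"
proof -
  have pos: "0 < d powr e" using d by simp
  have "e * ln d = ln (d powr e)" using d by (simp add: ln_powr)
  also have "\<dots> \<le> ln (real N)"
  proof -
    have "0 < real N" using pos N by linarith
    then show ?thesis using pos N by (simp only: ln_le_cancel_iff)
  qed
  finally have "(- e) * (- ln d) \<le> ln (real N)" by simp
  moreover have "- ln d > 0" using d by simp
  ultimately show ?thesis by (simp only: pos_le_divide_eq)
qed

lemma Limsup_ge_seq:
  fixes h :: "real \<Rightarrow> ereal"
  assumes s: "\<And>n. 0 < s n" "s \<longlonglongrightarrow> 0" and c: "\<And>n. c \<le> h (s n)"
  shows "c \<le> Limsup (at_right 0) h"
proof (rule ccontr)
  assume "\<not> c \<le> Limsup (at_right 0) h"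
  then have "Limsup (at_right 0) h < c" by simp
  then have "\<forall>\<^sub>F y in at_right 0. h y < c" by (rule Limsup_lessD)
  then obtain b where b: "b > 0" "\<And>y. 0 < y \<Longrightarrow> y < b \<Longrightarrow> h y < c"
    unfolding eventually_at_right_field by auto
  have "\<forall>\<^sub>F n in sequentially. s n < b" using order_tendstoD(2)[OF s(2) b(1)] .
  then obtain n where "s n < b" by (meson eventually_sequentially order_refl)
  then have "h (s n) < c" using b s(1) by blast
  then show False using c[of n] by simp
qed



lemma lower:
  fixes X :: "real set" and a \<epsilon> :: real
  assumes X: "X \<subseteq> {0..1}" and fin: "finite {x\<in>X. \<not> x islimpt X}" and inf: "infinite X"
   and eps: "0 < \<epsilon>" "\<epsilon> \<le> 1/4" and a: "ereal a < upper_box_dim X"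
  shows "\<exists>f::real\<Rightarrow>real. uniformly_continuous_on X f \<and> ereal (a + 1 - 2*\<epsilon>) \<le> upper_box_dim ((\<lambda>x. (x, f x)) ` X)"
proof -
  define Q where "Q g d' \<phi> \<longleftrightarrow> 0 < d' \<and> continuous_on UNIV \<phi> \<and> (\<forall>x. 0 \<le> \<phi> x \<and> \<phi> x \<le> d' powr \<epsilon>) \<and>
     (\<forall>F. (\<forall>x\<in>X. g x + \<phi> x \<le> F x \<and> F x \<le> g x + \<phi> x + d'/2) \<longrightarrow>
        d' powr (-(a + 1 - 2*\<epsilon>)) \<le> real (card (boxes d' ((\<lambda>x. (x, F x)) ` X))))"
    for g :: "real \<Rightarrow> real" and d' and \<phi> :: "real \<Rightarrow> real"
  define bnd where "bnd d = min (d/2) ((d/4) powr (1/\<epsilon>))" for d :: real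
  define spec where "spec s s' \<longleftrightarrow> (\<exists>\<phi>. snd s' = (\<lambda>x. snd s x + \<phi> x) \<and> fst s' < bnd (fst s) \<and> Q (snd s) (fst s') \<phi>)"
    for s s' :: "real \<times> (real \<Rightarrow> real)"
  define Inv where "Inv s \<longleftrightarrow> 0 < fst s \<and> fst s \<le> 1 \<and> continuous_on UNIV (snd s)"
    for s :: "real \<times> (real \<Rightarrow> real)"
  have ex: "\<exists>s'. spec s s'" if "Inv s" for s
  proof -
    have "bnd (fst s) > 0" using that by (simp add: Inv_def bnd_def)
    moreover have "continuous_on UNIV (snd s)" using that by (simp add: Inv_def)
    ultimately obtain d \<phi> where H: "0 < d" "d < bnd (fst s)" "continuous_on UNIV \<phi>" "\<forall>x. 0 \<le> \<phi> x \<and> \<phi> x \<le> d powr \<epsilon>"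
     "\<forall>F. (\<forall>x\<in>X. snd s x + \<phi> x \<le> F x \<and> F x \<le> snd s x + \<phi> x + d/2) \<longrightarrow>
        d powr (-(a + 1 - 2*\<epsilon>)) \<le> real (card (boxes d ((\<lambda>x. (x, F x)) ` X)))"
      using step[OF X fin inf _ eps a, of "snd s" "bnd (fst s)"] by blast
    then have "Q (snd s) d \<phi>" unfolding Q_def by blast
    then show ?thesis unfolding spec_def using H(2)
      by (intro exI[of _ "(d, \<lambda>x. snd s x + \<phi> x)"]) (auto intro!: exI[of _ \<phi>])
  qed
  define nxt where "nxt s = (SOME s'. spec s s')" for s
  have nxt: "spec s (nxt s) \<and> Inv (nxt s)" if "Inv s" for s
  proof -
    have sp: "spec s (nxt s)" unfolding nxt_def using someI_ex[OF ex[OF that]] .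
    then obtain \<phi> where \<phi>: "snd (nxt s) = (\<lambda>x. snd s x + \<phi> x)" "fst (nxt s) < bnd (fst s)" "Q (snd s) (fst (nxt s)) \<phi>"
      unfolding spec_def by blast
    have "fst (nxt s) < 1" using \<phi>(2) that by (simp add: bnd_def Inv_def)
    moreover have "continuous_on UNIV (snd (nxt s))" unfolding \<phi>(1)
      using that \<phi>(3) by (intro continuous_intros) (auto simp: Inv_def Q_def)
    ultimately show ?thesis using sp \<phi>(3) by (simp add: Inv_def Q_def)
  qed
  define st where "st n = (nxt ^^ n) (1, \<lambda>_. 0)" for n
  have st_Suc: "st (Suc n) = nxt (st n)" for n by (simp add: st_def)
  have Inv_st: "Inv (st n)" for n
  proof (induction n)
    case 0 then show ?case by (simp add: st_def Inv_def)
  next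
    case (Suc n) then show ?case using nxt[OF Suc.IH] st_Suc by simp
  qed
  have spec_st: "spec (st n) (st (Suc n))" for n using nxt[OF Inv_st[of n]] st_Suc by simp
  define dd where "dd n = fst (st n)" for n
  define gg where "gg n = snd (st n)" for n
  have "\<forall>n. \<exists>\<phi>. gg (Suc n) = (\<lambda>x. gg n x + \<phi> x) \<and> dd (Suc n) < bnd (dd n) \<and> Q (gg n) (dd (Suc n)) \<phi>"
    using spec_st unfolding spec_def dd_def gg_def by blast
  then obtain \<phi>s where \<phi>s: "\<And>n. gg (Suc n) = (\<lambda>x. gg n x + \<phi>s n x)" "\<And>n. dd (Suc n) < bnd (dd n)"
    "\<And>n. Q (gg n) (dd (Suc n)) (\<phi>s n)" by metis
  have dpos: "0 < dd n" "dd n \<le> 1" for n using Inv_st[of n] by (auto simp: Inv_def dd_def)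
  have gcont: "continuous_on UNIV (gg n)" for n using Inv_st[of n] by (auto simp: Inv_def gg_def)
  have dhalf: "dd (Suc n) < dd n / 2" for n using \<phi>s(2)[of n] by (simp add: bnd_def)
  have dpow: "dd (Suc n) powr \<epsilon> \<le> dd n / 4" for n
  proof -
    have "dd (Suc n) < (dd n / 4) powr (1/\<epsilon>)" using \<phi>s(2)[of n] by (simp add: bnd_def)
    then have "dd (Suc n) powr \<epsilon> \<le> ((dd n / 4) powr (1/\<epsilon>)) powr \<epsilon>"
      using dpos[of "Suc n"] eps by (intro powr_mono2) auto
    also have "\<dots> = dd n / 4" using eps dpos[of n] by (simp add: powr_powr)
    finally show ?thesis .
  qed
  have inc: "gg n x \<le> gg (Suc n) x" "gg (Suc n) x \<le> gg n x + dd n / 4" for n x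
  proof -
    have "0 \<le> \<phi>s n x" "\<phi>s n x \<le> dd (Suc n) powr \<epsilon>" using \<phi>s(3)[of n] unfolding Q_def by blast+
    then show "gg n x \<le> gg (Suc n) x" "gg (Suc n) x \<le> gg n x + dd n / 4"
      using \<phi>s(1)[of n] dpow[of n] by simp_all
  qed
  have tail: "gg k x \<le> gg n x \<and> gg n x \<le> gg k x + dd k / 2 - dd n / 2" if "k \<le> n" for k n x
    using that
  proof (induction n rule: dec_induct)
    case base then show ?case by simp
  next
    case (step n)
    then show ?case using inc[of n x] dhalf[of n] by linarith
  qed
  have dd0: "dd 0 = 1" by (simp add: dd_def st_def)
  have conv: "(\<lambda>n. gg n x) \<longlonglongrightarrow> lim (\<lambda>n. gg n x)" for x
  proof -
    have "incseq (\<lambda>n. gg n x)" using inc by (intro incseq_SucI) auto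
    moreover have "\<forall>n. gg n x \<le> gg 0 x + 1/2"
    proof
      fix n
      have "gg n x \<le> gg 0 x + dd 0 / 2 - dd n / 2" using tail[of 0 n x] by simp
      then show "gg n x \<le> gg 0 x + 1/2" using dd0 dpos[of n] by simp
    qed
    ultimately obtain L where "(\<lambda>n. gg n x) \<longlonglongrightarrow> L" by (rule incseq_convergent)
    then show ?thesis by (simp add: limI)
  qed
  define f where "f x = lim (\<lambda>n. gg n x)" for x
  have sand: "gg k x \<le> f x \<and> f x \<le> gg k x + dd k / 2" for k x
  proof -
    have c: "(\<lambda>n. gg n x) \<longlonglongrightarrow> f x" using conv[of x] by (simp add: f_def)
    have "gg k x \<le> f x" 
    proof (rule LIMSEQ_le_const[OF c], intro exI allI impI)
      fix n assume "k \<le> n" then show "gg k x \<le> gg n x" using tail by blast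
    qed
    moreover have "f x \<le> gg k x + dd k / 2"
    proof (rule LIMSEQ_le_const2[OF c], intro exI allI impI)
      fix n assume "k \<le> n" then show "gg n x \<le> gg k x + dd k / 2" using tail[of k n x] dpos[of n] by simp
    qed
    ultimately show ?thesis by simp
  qed
  have dgeo: "dd n \<le> (1/2)^n" for n
  proof (induction n)
    case 0 then show ?case using dd0 by simp
  next
    case (Suc n) then show ?case using dhalf[of n] by simp
  qed
  have geo0: "(\<lambda>n. (1/2::real)^n) \<longlonglongrightarrow> 0" by (rule LIMSEQ_realpow_zero) auto
  have fcont: "continuous_on UNIV f"
  proof (rule uniform_limit_theorem[where f = gg and F = sequentially])
    show "\<forall>\<^sub>F n in sequentially. continuous_on UNIV (gg n)" using gcont by simp
    show "uniform_limit UNIV gg f sequentially"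
      unfolding uniform_limit_iff
    proof (intro allI impI)
      fix e :: real assume e: "e > 0"
      have "\<forall>\<^sub>F n in sequentially. (1/2::real)^n < e" using order_tendstoD(2)[OF geo0 e] .
      then show "\<forall>\<^sub>F n in sequentially. \<forall>x\<in>UNIV. dist (gg n x) (f x) < e"
      proof (rule eventually_mono)
        fix n assume n: "(1/2::real)^n < e"
        show "\<forall>x\<in>UNIV. dist (gg n x) (f x) < e"
        proof
          fix x
          have "dist (gg n x) (f x) \<le> dd n / 2" using sand[of n x] by (simp add: dist_real_def)
          also have "\<dots> < e" using dgeo[of n] n dpos[of n] by linarith
          finally show "dist (gg n x) (f x) < e" .
        qed
      qed
    qed
  qed simp
  have uc: "uniformly_continuous_on X f"
    using uc_subset[OF compact_uniformly_continuous[OF continuous_on_subset[OF fcont subset_UNIV] compact_Icc] X] .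
  have "ereal (a + 1 - 2*\<epsilon>) \<le> Limsup (at_right 0) (\<lambda>d. ereal (ln (real (card (boxes d ((\<lambda>x. (x, f x)) ` X)))) / - ln d))"
  proof (rule Limsup_ge_seq[where s = "\<lambda>n. dd (Suc n)"])
    show "0 < dd (Suc n)" for n by (rule dpos)
    show "(\<lambda>n. dd (Suc n)) \<longlonglongrightarrow> 0"
    proof (rule tendsto_sandwich[of "\<lambda>_. 0" _ _ "\<lambda>n. (1/2)^(Suc n)"])
      show "\<forall>\<^sub>F n in sequentially. 0 \<le> dd (Suc n)" using dpos by (simp add: less_imp_le)
      show "\<forall>\<^sub>F n in sequentially. dd (Suc n) \<le> (1/2)^(Suc n)" using dgeo[of "Suc _"] by (intro always_eventually allI) blast
      show "(\<lambda>n. (1/2::real)^(Suc n)) \<longlonglongrightarrow> 0" using geo0 by (rule LIMSEQ_Suc)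
    qed simp
    fix n
    have "\<forall>x\<in>X. gg n x + \<phi>s n x \<le> f x \<and> f x \<le> gg n x + \<phi>s n x + dd (Suc n)/2"
      using sand[of "Suc n"] \<phi>s(1)[of n] by simp
    then have "dd (Suc n) powr (-(a + 1 - 2*\<epsilon>)) \<le> real (card (boxes (dd (Suc n)) ((\<lambda>x. (x, f x)) ` X)))"
      using \<phi>s(3)[of n] unfolding Q_def by blast
    moreover have "dd (Suc n) < 1" using dhalf[of n] dpos[of n] by linarith
    ultimately have "- (-(a + 1 - 2*\<epsilon>)) \<le> ln (real (card (boxes (dd (Suc n)) ((\<lambda>x. (x, f x)) ` X)))) / - ln (dd (Suc n))"
      using ratio_lower dpos by blast
    then show "ereal (a + 1 - 2*\<epsilon>) \<le> ereal (ln (real (card (boxes (dd (Suc n)) ((\<lambda>x. (x, f x)) ` X)))) / - ln (dd (Suc n)))"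
      by simp
  qed
  then show ?thesis using uc unfolding upper_box_dim_def by (intro exI[of _ f]) (simp add: gc_prod)
qed



theorem corollary1:
  fixes X :: "real set"
  assumes "X \<subseteq> {0..1}"
    and "finite {x \<in> X. \<not> x islimpt X}"
    and "infinite X"
  shows "upper_graph_box_dim X = upper_box_dim X + 1"
proof (rule antisym)
  have ne: "X \<noteq> {}" using assms(3) by auto
  show "upper_graph_box_dim X \<le> upper_box_dim X + 1"
    unfolding upper_graph_box_dim_def
  proof (rule SUP_least)
    fix f :: "real \<Rightarrow> real" assume "f \<in> {f. uniformly_continuous_on X f}"
    then have uc: "uniformly_continuous_on X f" by simp
    have "bounded X" using assms(1) bounded_subset[OF compact_imp_bounded[OF compact_Icc]] by blast
    then have "bounded (f ` X)" using bounded_uniformly_continuous_image[OF uc] by blast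
    then obtain B where "\<forall>y\<in>f ` X. norm y \<le> B" unfolding bounded_iff by blast
    then have "\<forall>x\<in>X. \<bar>f x\<bar> \<le> B" by auto
    then show "upper_box_dim ((\<lambda>x. (x, f x)) ` X) \<le> upper_box_dim X + 1"
      by (rule upper_dim_graph[OF assms(1) ne])
  qed
  show "upper_box_dim X + 1 \<le> upper_graph_box_dim X"
  proof (rule ccontr)
    assume "\<not> upper_box_dim X + 1 \<le> upper_graph_box_dim X"
    then have "upper_graph_box_dim X < upper_box_dim X + 1" by simp
    then obtain t where t: "upper_graph_box_dim X < ereal t" "ereal t < upper_box_dim X + 1"
      using ereal_dense2 by blast
    have "ereal (t - 1) < upper_box_dim X" using t(2) by (cases "upper_box_dim X") auto
    then obtain a where a: "ereal (t - 1) < ereal a" "ereal a < upper_box_dim X"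
      using ereal_dense2 by blast
    define \<epsilon> where "\<epsilon> = min (1/4) ((a - (t - 1))/2)"
    have eps: "0 < \<epsilon>" "\<epsilon> \<le> 1/4" using a(1) by (auto simp: \<epsilon>_def)
    obtain f :: "real \<Rightarrow> real" where f: "uniformly_continuous_on X f"
      "ereal (a + 1 - 2*\<epsilon>) \<le> upper_box_dim ((\<lambda>x. (x, f x)) ` X)"
      using lower[OF assms eps a(2)] by blast
    have "upper_box_dim ((\<lambda>x. (x, f x)) ` X) \<le> upper_graph_box_dim X"
      unfolding upper_graph_box_dim_def using f(1) by (intro SUP_upper) simp
    moreover have "t \<le> a + 1 - 2*\<epsilon>"
    proof -
      have "\<epsilon> \<le> (a - (t - 1))/2" unfolding \<epsilon>_def by (rule min.cobounded2)
      then show ?thesis by (simp add: field_simps)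
    qed
    ultimately have "ereal t \<le> upper_graph_box_dim X" using f(2) by (metis ereal_less_eq(3) order_trans)
    then show False using t(1) by simp
  qed
qed

end
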